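(* Let $n\ge2$, let $\lambda_1\ge\dots\ge\lambda_n$ be real numbers, and let $\mu_1\ge\dots\ge\mu_{n-1}$ be the critical points (roots of the derivative, with multiplicity) of $q(x)=\prod_{j=1}^n(x-\lambda_j)$. Then for all integers $1\le\ell\le r\le n-1$, $$\sum_{j=\ell}^r\lambda_{j+1}+\frac{1}{r+1}\sum_{j=\ell}^r(\lambda_\ell-\lambda_{j+1})\le\sum_{j=\ell}^r\mu_j\le\sum_{j=\ell}^r\lambda_j-\frac{1}{n-\ell+1}\sum_{j=\ell}^r(\lambda_j-\lambda_{r+1}).$$ Equivalently, $$\frac{r}{r+1}\sum_{j=\ell}^r\lambda_{j+1}+\frac{r-\ell+1}{r+1}\lambda_\ell\le\sum_{j=\ell}^r\mu_j\le\frac{n-\ell}{n-\ell+1}\sum_{j=\ell}^r\lambda_j+\frac{r-\ell+1}{n-\ell+1}\lambda_{r+1}.$$ *)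

theory Defs
  imports "HOL-Analysis.Analysis" "HOL-Computational_Algebra.Polynomial"
begin

end

theory Submission
  imports Defs
begin

lemma prod_lin_nz: "(\<Prod>k\<in>A. [:- (c k::real), 1:]) \<noteq> 0"
  by (cases "finite A") (auto simp: prod_zero_iff)

lemma ord_prod:
  fixes c :: "nat \<Rightarrow> real"
  assumes "finite A"
  shows "order x (\<Prod>k\<in>A. [:- c k, 1:]) = card {k\<in>A. c k = x}"
  using assms
proof (induction A rule: finite_induct)
  case empty then show ?case by simp
next
  case (insert a A)
  have nz: "(\<Prod>k\<in>insert a A. [:- c k, 1:]) \<noteq> 0"
    by (rule prod_lin_nz)
  have "order x (\<Prod>k\<in>insert a A. [:- c k, 1:]) = order x ([:- c a, 1:] * (\<Prod>k\<in>A. [:- c k, 1:]))"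
    using insert by simp
  also have "\<dots> = order x [:- c a, 1:] + order x (\<Prod>k\<in>A. [:- c k, 1:])"
    using nz insert by (intro order_mult) simp
  also have "order x [:- c a, 1:] = (if c a = x then 1 else 0)"
  proof (cases "c a = x")
    case True then show ?thesis using order_power_n_n[of x 1] by simp
  next
    case False then show ?thesis by (simp add: order_0I)
  qed
  also have "{k\<in>insert a A. c k = x} = (if c a = x then insert a {k\<in>A. c k = x} else {k\<in>A. c k = x})"
    by auto
  ultimately show ?case using insert by auto
qed


lemma degree_prod_lin:
  assumes "finite A" shows "degree (\<Prod>k\<in>A. [:- (c k::real), 1:]) = card A"
  by (subst degree_prod_eq_sum_degree) auto

lemma coeff_prod_lin:
  fixes c :: "nat \<Rightarrow> real"
  assumes "finite A"
  shows "coeff (\<Prod>k\<in>A. [:- c k, 1:]) (card A) = 1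
       \<and> (A \<noteq> {} \<longrightarrow> coeff (\<Prod>k\<in>A. [:- c k, 1:]) (card A - 1) = - (\<Sum>k\<in>A. c k))"
  using assms
proof (induction A rule: finite_induct)
  case empty then show ?case by simp
next
  case (insert a A)
  let ?P = "\<Prod>k\<in>A. [:- c k, 1:]"
  have e: "(\<Prod>k\<in>insert a A. [:- c k, 1:]) = pCons 0 ?P - smult (c a) ?P"
    using insert by (simp add: mult_pCons_left)
  have c: "coeff (\<Prod>k\<in>insert a A. [:- c k, 1:]) n = (if n = 0 then 0 else coeff ?P (n - 1)) - c a * coeff ?P n" for n
    unfolding e by (cases n) auto
  have dg: "degree ?P = card A" using insert degree_prod_lin by blast
  have z: "coeff ?P (Suc (card A)) = 0" using dg by (simp add: coeff_eq_0)
  show ?case using insert c[of "Suc (card A)"] c[of "card A"] z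
    by (cases "A = {}") (auto simp: algebra_simps)
qed
lemma logderiv:
  fixes c :: "nat \<Rightarrow> real"
  assumes "finite A" and nz: "poly (\<Prod>k\<in>A. [:- c k, 1:]) t \<noteq> 0"
  shows "poly (pderiv (\<Prod>k\<in>A. [:- c k, 1:])) t
       = poly (\<Prod>k\<in>A. [:- c k, 1:]) t * (\<Sum>k\<in>A. 1 / (t - c k))"
proof -
  have ne: "t - c a \<noteq> 0" if "a \<in> A" for a
    using nz that assms(1) by (auto simp: poly_prod prod_zero_iff)
  have r: "poly (\<Prod>k\<in>A - {a}. [:- c k, 1:]) t = poly (\<Prod>k\<in>A. [:- c k, 1:]) t / (t - c a)"
    if "a \<in> A" for a
  proof -
    have "poly (\<Prod>k\<in>A. [:- c k, 1:]) t = (t - c a) * poly (\<Prod>k\<in>A - {a}. [:- c k, 1:]) t"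
      using that assms(1) by (simp add: poly_prod prod.remove algebra_simps)
    then show ?thesis using ne[OF that] by (simp add: field_simps)
  qed
  have "poly (pderiv (\<Prod>k\<in>A. [:- c k, 1:])) t = (\<Sum>a\<in>A. poly (\<Prod>k\<in>A - {a}. [:- c k, 1:]) t)"
    by (simp add: pderiv_prod poly_sum pderiv_pCons)
  also have "\<dots> = (\<Sum>a\<in>A. poly (\<Prod>k\<in>A. [:- c k, 1:]) t * (1 / (t - c a)))"
    by (intro sum.cong) (auto simp: r)
  finally show ?thesis by (simp add: sum_distrib_left)
qed

lemma dvd_from_orders:
  fixes R :: "real poly" and p :: "nat \<Rightarrow> real"
  assumes "finite I" "R \<noteq> 0" "\<And>x. card {k\<in>I. p k = x} \<le> order x R"
  shows "(\<Prod>k\<in>I. [:- p k, 1:]) dvd R"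
  using assms
proof (induction I rule: finite_induct)
  case empty then show ?case by simp
next
  case (insert i I)
  have "card {k\<in>I. p k = x} \<le> order x R" for x
  proof -
    have "card {k\<in>I. p k = x} \<le> card {k\<in>insert i I. p k = x}"
      using insert by (intro card_mono) auto
    then show ?thesis using insert(5)[of x] by linarith
  qed
  then have "(\<Prod>k\<in>I. [:- p k, 1:]) dvd R" using insert by blast
  then obtain S where S: "R = (\<Prod>k\<in>I. [:- p k, 1:]) * S" by (elim dvdE)
  have Snz: "S \<noteq> 0" using S insert by auto
  have "order (p i) R = card {k\<in>I. p k = p i} + order (p i) S"
    using S insert ord_prod[OF insert(1)] by (simp add: order_mult)
  moreover have "{k\<in>insert i I. p k = p i} = insert i {k\<in>I. p k = p i}" by auto
  then have "card {k\<in>insert i I. p k = p i} = Suc (card {k\<in>I. p k = p i})"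
    using insert by simp
  ultimately have "order (p i) S \<noteq> 0" using insert(5)[of "p i"] by linarith
  then have "poly S (p i) = 0" using order_root by blast
  then have "[:- p i, 1:] dvd S" by (simp add: dvd_iff_poly_eq_0)
  then have "[:- p i, 1:] * (\<Prod>k\<in>I. [:- p k, 1:]) dvd S * (\<Prod>k\<in>I. [:- p k, 1:])"
    by (rule mult_dvd_mono) simp
  moreover have "(\<Prod>k\<in>insert i I. [:- p k, 1:]) = [:- p i, 1:] * (\<Prod>k\<in>I. [:- p k, 1:])"
    using insert(1,2) by (rule prod.insert)
  ultimately show ?case using S by (simp add: mult.commute)
qed

lemma poly_prod_root:
  fixes c :: "nat \<Rightarrow> real"
  assumes "i \<in> A" "finite A"
  shows "poly (\<Prod>k\<in>A. [:- c k, 1:]) (c i) = 0"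
  using assms by (auto simp: poly_prod prod_zero_iff)

lemma crit_exists:
  fixes c :: "nat \<Rightarrow> real" and m :: nat
  assumes m: "m \<ge> 1" and mono: "\<And>i j. 1 \<le> i \<Longrightarrow> i \<le> j \<Longrightarrow> j \<le> m \<Longrightarrow> c j \<le> c i"
  shows "\<exists>p. (\<forall>k\<in>{1..m-1}. c (Suc k) \<le> p k \<and> p k \<le> c k)
           \<and> pderiv (\<Prod>k=1..m. [:- c k, 1:]) = smult (of_nat m) (\<Prod>k=1..m-1. [:- p k, 1:])"
proof -
  define Q where "Q = (\<Prod>k=1..m. [:- c k, 1:])"
  define R where "R = pderiv Q"
  have Qnz: "Q \<noteq> 0" unfolding Q_def by (rule prod_lin_nz)
  have cQ: "coeff Q m = 1" using coeff_prod_lin[of "{1..m}" c] unfolding Q_def by simp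
  have dQ: "degree Q = m" using degree_prod_lin[of "{1..m}" c] unfolding Q_def by simp
  have cR: "coeff R (m - 1) = of_nat m"
    using m cQ unfolding R_def by (simp add: coeff_pderiv)
  have Rnz: "R \<noteq> 0" using cR m by auto
  have dR: "degree R = m - 1" unfolding R_def using dQ by (simp add: degree_pderiv)
  have Qroot: "poly Q (c i) = 0" if "i \<in> {1..m}" for i
    unfolding Q_def using that by (intro poly_prod_root) auto
  have rolle: "\<exists>x. c (Suc k) < x \<and> x < c k \<and> poly R x = 0"
    if kk: "k \<in> {1..m-1}" and lt: "c (Suc k) < c k" for k
  proof -
    obtain x where "c (Suc k) < x" "x < c k"
      "poly Q (c k) - poly Q (c (Suc k)) = (c k - c (Suc k)) * poly (pderiv Q) x"
      using poly_MVT[OF lt] by blast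
    moreover have "poly Q (c k) = 0" "poly Q (c (Suc k)) = 0" using kk by (auto intro!: Qroot)
    ultimately show ?thesis using lt unfolding R_def by auto
  qed
  define p where "p k = (if c (Suc k) < c k then (SOME x. c (Suc k) < x \<and> x < c k \<and> poly R x = 0) else c k)" for k
  have pprop: "c (Suc k) < p k \<and> p k < c k \<and> poly R (p k) = 0"
    if "k \<in> {1..m-1}" "c (Suc k) < c k" for k
    using someI_ex[OF rolle[OF that]] that(2) unfolding p_def by simp
  have peq: "p k = c k \<and> c (Suc k) = c k" if "k \<in> {1..m-1}" "\<not> c (Suc k) < c k" for k
    using that mono[of k "Suc k"] unfolding p_def by auto
  have bounds: "\<forall>k\<in>{1..m-1}. c (Suc k) \<le> p k \<and> p k \<le> c k"
    using pprop peq by (metis less_le_not_le nle_le)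
  have fiber: "card {k\<in>{1..m-1}. p k = x} \<le> order x R" for x
  proof (cases "\<exists>i\<in>{1..m}. c i = x")
    case True
    define E where "E = {i\<in>{1..m}. c i = x}"
    have Ene: "E \<noteq> {}" "finite E" using True unfolding E_def by auto
    define i0 where "i0 = Min E"
    have i0: "i0 \<in> E" "\<And>i. i \<in> E \<Longrightarrow> i0 \<le> i" using Ene unfolding i0_def by auto
    have sub1: "{k\<in>{1..m-1}. p k = x} \<subseteq> {k\<in>{1..m-1}. c k = x \<and> c (Suc k) = x}"
    proof
      fix k assume k: "k \<in> {k\<in>{1..m-1}. p k = x}"
      show "k \<in> {k\<in>{1..m-1}. c k = x \<and> c (Suc k) = x}"
      proof (cases "c (Suc k) < c k")
        case True
        with pprop k have in1: "c (Suc k) < x" "x < c k" by auto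
        from \<open>\<exists>i\<in>{1..m}. c i = x\<close> obtain i where i: "i \<in> {1..m}" "c i = x" by blast
        show ?thesis
        proof (cases "i \<le> k")
          case True then have "c k \<le> c i" using mono[of i k] i k by auto
          then show ?thesis using in1 i by auto
        next
          case False then have "c i \<le> c (Suc k)" using mono[of "Suc k" i] i k by auto
          then show ?thesis using in1 i by auto
        qed
      next
        case False then show ?thesis using peq k by auto
      qed
    qed
    have sub2: "Suc ` {k\<in>{1..m-1}. c k = x \<and> c (Suc k) = x} \<subseteq> E - {i0}"
    proof
      fix j assume "j \<in> Suc ` {k\<in>{1..m-1}. c k = x \<and> c (Suc k) = x}"
      then obtain k where k: "j = Suc k" "k \<in> {1..m-1}" "c k = x" "c (Suc k) = x" by auto
      have "k \<in> E" using k m unfolding E_def by auto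
      then have "i0 \<le> k" using i0 by auto
      then show "j \<in> E - {i0}" using k m unfolding E_def by auto
    qed
    have "card {k\<in>{1..m-1}. p k = x} \<le> card {k\<in>{1..m-1}. c k = x \<and> c (Suc k) = x}"
      using sub1 by (intro card_mono) auto
    also have "\<dots> = card (Suc ` {k\<in>{1..m-1}. c k = x \<and> c (Suc k) = x})"
      by (simp add: card_image)
    also have "\<dots> \<le> card (E - {i0})" using sub2 Ene by (intro card_mono) auto
    also have "\<dots> = card E - 1" using i0 Ene by simp
    also have "card E = order x Q" unfolding E_def Q_def by (simp add: ord_prod)
    also have "order x Q = Suc (order x R)"
      unfolding R_def using Qnz True Qroot by (intro order_pderiv) auto
    finally show ?thesis by simp
  next
    case False
    show ?thesis
    proof (cases "{k\<in>{1..m-1}. p k = x} = {}")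
      case True then show ?thesis by (subst True) simp
    next
      case False2: False
      then obtain k where k: "k \<in> {1..m-1}" "p k = x" by auto
      have strict: "c (Suc k') < c k'" if "k' \<in> {1..m-1}" "p k' = x" for k'
        using peq[of k'] that False by force
      have rx: "poly R x = 0" using pprop[OF k(1) strict[OF k]] k by simp
      have "{k\<in>{1..m-1}. p k = x} \<subseteq> {k}"
      proof
        fix k' assume k': "k' \<in> {k\<in>{1..m-1}. p k = x}"
        have a: "c (Suc k') < x" "x < c k'" using pprop[of k'] strict[of k'] k' by auto
        have b: "c (Suc k) < x" "x < c k" using pprop[of k] strict[of k] k by auto
        have "\<not> k < k'"
        proof
          assume "k < k'" then have "c k' \<le> c (Suc k)" using mono[of "Suc k" k'] k k' by auto
          then show False using a b by auto
        qed
        moreover have "\<not> k' < k"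
        proof
          assume "k' < k" then have "c k \<le> c (Suc k')" using mono[of "Suc k'" k] k k' by auto
          then show False using a b by auto
        qed
        ultimately show "k' \<in> {k}" by auto
      qed
      then have "card {k\<in>{1..m-1}. p k = x} \<le> 1"
        using card_mono[of "{k}"] by fastforce
      moreover have "order x R \<ge> 1" using rx Rnz order_root by (metis less_one not_le)
      ultimately show ?thesis by linarith
    qed
  qed
  have dv: "(\<Prod>k=1..m-1. [:- p k, 1:]) dvd R"
    by (rule dvd_from_orders) (use Rnz fiber in auto)
  then obtain S where S: "R = (\<Prod>k=1..m-1. [:- p k, 1:]) * S" by (elim dvdE)
  have Snz: "S \<noteq> 0" using S Rnz by auto
  have "degree R = degree (\<Prod>k=1..m-1. [:- p k, 1:]) + degree S"
    using S Snz prod_lin_nz by (simp add: degree_mult_eq)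
  moreover have "degree (\<Prod>k=1..m-1. [:- p k, 1:]) = m - 1"
    using degree_prod_lin[of "{1..m-1}" p] by simp
  ultimately have "degree S = 0" using dR by simp
  then have S0: "S = [:coeff S 0:]" by (rule degree_0_id[symmetric])
  have R2: "R = smult (coeff S 0) (\<Prod>k=1..m-1. [:- p k, 1:])"
    by (subst S, subst S0) (simp add: mult.commute)
  have "coeff R (m - 1) = coeff S 0"
    using R2 coeff_prod_lin[of "{1..m-1}" p] by simp
  then have "coeff S 0 = of_nat m" using cR by simp
  then show ?thesis using R2 bounds unfolding R_def Q_def by auto
qed

lemma vieta:
  fixes c d :: "nat \<Rightarrow> real"
  assumes m: "m \<ge> 2" and h: "pderiv (\<Prod>k=1..m. [:- c k, 1:]) = smult (of_nat m) (\<Prod>k=1..m-1. [:- d k, 1:])"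
  shows "(\<Sum>k=1..m-1. d k) = (real m - 1) / real m * (\<Sum>k=1..m. c k)"
proof -
  have "coeff (pderiv (\<Prod>k=1..m. [:- c k, 1:])) (m - 2) = of_nat (m - 1) * (- (\<Sum>k=1..m. c k))"
    using coeff_prod_lin[of "{1..m}" c] m by (simp add: coeff_pderiv Suc_diff_Suc numeral_2_eq_2)
  moreover have "coeff (smult (of_nat m) (\<Prod>k=1..m-1. [:- d k, 1:])) (m - 2) = of_nat m * (- (\<Sum>k=1..m-1. d k))"
    using coeff_prod_lin[of "{1..m-1}" d] m by (simp add: numeral_2_eq_2)
  ultimately have "real (m - 1) * (\<Sum>k=1..m. c k) = real m * (\<Sum>k=1..m-1. d k)"
    using h by simp
  moreover have "real (m - 1) = real m - 1" using m by simp
  ultimately show ?thesis using m by (simp add: field_simps)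
qed

lemma card_ge_fibers:
  fixes f :: "nat \<Rightarrow> real"
  assumes "finite I" "finite V" "\<And>k. k \<in> I \<Longrightarrow> t \<le> f k \<Longrightarrow> f k \<in> V" "\<And>x. x \<in> V \<Longrightarrow> t \<le> x"
  shows "card {k\<in>I. t \<le> f k} = (\<Sum>x\<in>V. card {k\<in>I. f k = x})"
proof -
  have "{k\<in>I. t \<le> f k} = (\<Union>x\<in>V. {k\<in>I. f k = x})" using assms by auto
  then have "card {k\<in>I. t \<le> f k} = card (\<Union>x\<in>V. {k\<in>I. f k = x})" by simp
  also have "\<dots> = (\<Sum>x\<in>V. card {k\<in>I. f k = x})"
    using assms by (intro card_UN_disjoint) auto
  finally show ?thesis .
qed

lemma sorted_half:
  fixes mu p :: "nat \<Rightarrow> real"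
  assumes mm: "\<And>i j. 1 \<le> i \<Longrightarrow> i \<le> j \<Longrightarrow> j \<le> M \<Longrightarrow> mu j \<le> mu i"
    and pm: "\<And>i j. 1 \<le> i \<Longrightarrow> i \<le> j \<Longrightarrow> j \<le> M \<Longrightarrow> p j \<le> p i"
    and fib: "\<And>x. card {k\<in>{1..M}. mu k = x} = card {k\<in>{1..M}. p k = x}"
    and j: "j \<in> {1..M}"
  shows "p j \<le> mu j"
proof (rule ccontr)
  assume "\<not> p j \<le> mu j"
  then have lt: "mu j < p j" by simp
  define t where "t = p j"
  define V where "V = (mu ` {1..M} \<union> p ` {1..M}) \<inter> {t..}"
  have fV: "finite V" unfolding V_def by auto
  have e1: "card {k\<in>{1..M}. t \<le> mu k} = (\<Sum>x\<in>V. card {k\<in>{1..M}. mu k = x})"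
    by (rule card_ge_fibers) (auto simp: V_def fV)
  have e2: "card {k\<in>{1..M}. t \<le> p k} = (\<Sum>x\<in>V. card {k\<in>{1..M}. p k = x})"
    by (rule card_ge_fibers) (auto simp: V_def fV)
  have "{1..j} \<subseteq> {k\<in>{1..M}. t \<le> p k}" using j pm unfolding t_def by auto
  then have "card {1..j} \<le> card {k\<in>{1..M}. t \<le> p k}"
    by (intro card_mono) auto
  then have c1: "j \<le> card {k\<in>{1..M}. t \<le> p k}" by simp
  have "{k\<in>{1..M}. t \<le> mu k} \<subseteq> {1..j-1}"
  proof
    fix k assume k: "k \<in> {k\<in>{1..M}. t \<le> mu k}"
    have "\<not> j \<le> k"
    proof
      assume "j \<le> k" then have "mu k \<le> mu j" using mm j k by auto
      then show False using k lt unfolding t_def by auto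
    qed
    then show "k \<in> {1..j-1}" using k by auto
  qed
  then have "card {k\<in>{1..M}. t \<le> mu k} \<le> card {1..j-1}"
    by (intro card_mono) auto
  then have c2: "card {k\<in>{1..M}. t \<le> mu k} \<le> j - 1" by simp
  show False using c1 c2 e1 e2 fib j by (simp del: One_nat_def) linarith
qed

lemma sorted_unique:
  fixes mu p :: "nat \<Rightarrow> real"
  assumes mm: "\<And>i j. 1 \<le> i \<Longrightarrow> i \<le> j \<Longrightarrow> j \<le> M \<Longrightarrow> mu j \<le> mu i"
    and pm: "\<And>i j. 1 \<le> i \<Longrightarrow> i \<le> j \<Longrightarrow> j \<le> M \<Longrightarrow> p j \<le> p i"
    and eq: "(\<Prod>k=1..M. [:- mu k, 1:]) = (\<Prod>k=1..M. [:- p k, 1:])"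
    and j: "j \<in> {1..M}"
  shows "mu j = p j"
proof -
  have fib: "card {k\<in>{1..M}. mu k = x} = card {k\<in>{1..M}. p k = x}" for x
    using ord_prod[of "{1..M}" x mu] ord_prod[of "{1..M}" x p] eq by simp
  show ?thesis using sorted_half[OF mm pm fib j] sorted_half[OF pm mm fib[symmetric] j] by simp
qed

lemma charF:
  fixes c p :: "nat \<Rightarrow> real"
  assumes mono: "\<And>i j. 1 \<le> i \<Longrightarrow> i \<le> j \<Longrightarrow> j \<le> m \<Longrightarrow> c j \<le> c i"
    and bounds: "\<forall>k\<in>{1..m-1}. c (Suc k) \<le> p k \<and> p k \<le> c k"
    and crit: "pderiv (\<Prod>k=1..m. [:- c k, 1:]) = smult (of_nat m) (\<Prod>k=1..m-1. [:- p k, 1:])"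
    and j: "j \<in> {1..m-1}" and t1: "c (Suc j) < t" and t2: "t < c j"
  shows "t \<le> p j \<longleftrightarrow> 0 \<le> (\<Sum>k=1..m. 1 / (t - c k))"
proof -
  define Q where "Q = (\<Prod>k=1..m. [:- c k, 1:])"
  define F where "F = (\<Sum>k=1..m. 1 / (t - c k))"
  have uniq: "x = p j" if x1: "c (Suc j) < x" and x2: "x < c j" and x0: "poly (pderiv Q) x = 0" for x
  proof -
    have "m \<noteq> 0" using j by auto
    then have "poly (\<Prod>k=1..m-1. [:- p k, 1:]) x = 0" using x0 crit unfolding Q_def by simp
    then obtain k where k: "k \<in> {1..m-1}" "x = p k" by (auto simp: poly_prod prod_zero_iff)
    have "\<not> k < j"
    proof
      assume "k < j" then have "c j \<le> c (Suc k)" using mono[of "Suc k" j] j by auto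
      then show False using bounds k x2 by force
    qed
    moreover have "\<not> j < k"
    proof
      assume "j < k" then have "c k \<le> c (Suc j)" using mono[of "Suc j" k] k by auto
      then show False using bounds k x1 by force
    qed
    ultimately show ?thesis using k by simp
  qed
  have Qt: "poly Q t \<noteq> 0"
  proof
    assume "poly Q t = 0"
    then obtain k where k: "k \<in> {1..m}" "t = c k" unfolding Q_def by (auto simp: poly_prod prod_zero_iff)
    show False
    proof (cases "k \<le> j")
      case True then have "c j \<le> c k" using mono[of k j] k j by auto
      then show False using k t2 by auto
    next
      case False then have "c k \<le> c (Suc j)" using mono[of "Suc j" k] k by auto
      then show False using k t1 by auto
    qed
  qed
  have ld: "poly (pderiv Q) t = poly Q t * F"
    unfolding Q_def F_def by (rule logderiv) (use Qt in \<open>auto simp: Q_def\<close>)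
  have Qcj: "poly Q (c j) = 0" "poly Q (c (Suc j)) = 0" unfolding Q_def using j
    by (auto intro!: poly_prod_root)
  have sq: "poly Q t * poly Q t > 0"
    using Qt by (cases "poly Q t > 0") (auto intro: mult_pos_pos mult_neg_neg)
  consider "F = 0" | "F > 0" | "F < 0" by linarith
  then show ?thesis
  proof cases
    case 1
    then have "t = p j" using uniq[OF t1 t2] ld by simp
    then show ?thesis using 1 F_def by simp
  next
    case 2
    obtain xi where xi: "t < xi" "xi < c j" "poly Q (c j) - poly Q t = (c j - t) * poly (pderiv Q) xi"
      using poly_MVT[OF t2] by blast
    have pxi: "poly (pderiv Q) xi = - poly Q t / (c j - t)" using xi Qcj t2 by (simp add: field_simps)
    have "poly (pderiv Q) t * poly (pderiv Q) xi = - ((poly Q t * poly Q t) * F / (c j - t))"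
      unfolding ld pxi by (simp add: algebra_simps)
    moreover have "(poly Q t * poly Q t) * F / (c j - t) > 0" using Qt 2 t2
      by (intro divide_pos_pos mult_pos_pos sq) auto
    ultimately have "poly (pderiv Q) t * poly (pderiv Q) xi < 0" by linarith
    then obtain x where x: "t < x" "x < xi" "poly (pderiv Q) x = 0" using poly_IVT[OF xi(1)] by blast
    then have "x = p j" using uniq[of x] t1 xi by auto
    then show ?thesis using x 2 F_def by simp
  next
    case 3
    obtain xi where xi: "c (Suc j) < xi" "xi < t" "poly Q t - poly Q (c (Suc j)) = (t - c (Suc j)) * poly (pderiv Q) xi"
      using poly_MVT[OF t1] by blast
    have pxi: "poly (pderiv Q) xi = poly Q t / (t - c (Suc j))" using xi Qcj t1 by (simp add: field_simps)
    have "poly (pderiv Q) xi * poly (pderiv Q) t = - ((poly Q t * poly Q t) * (- F) / (t - c (Suc j)))"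
      unfolding ld pxi by (simp add: algebra_simps)
    moreover have "(poly Q t * poly Q t) * (- F) / (t - c (Suc j)) > 0" using Qt 3 t1
      by (intro divide_pos_pos mult_pos_pos sq) auto
    ultimately have "poly (pderiv Q) xi * poly (pderiv Q) t < 0" by linarith
    then obtain x where x: "xi < x" "x < t" "poly (pderiv Q) x = 0" using poly_IVT[OF xi(2)] by blast
    then have "x = p j" using uniq[of x] t2 xi by auto
    then show ?thesis using x 3 F_def by simp
  qed
qed

lemma sum_split:
  fixes f :: "nat \<Rightarrow> real"
  assumes "m \<le> k + 1" "k \<le> n"
  shows "(\<Sum>i=m..n. f i) = (\<Sum>i=m..k. f i) + (\<Sum>i=k+1..n. f i)"
  using sum.ub_add_nat[OF assms(1), of f "n - k"] assms(2) by simp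

theorem proposition2p4:
  fixes n :: nat and lam mu :: "nat \<Rightarrow> real" and l r :: nat
  assumes "n \<ge> 2"
    and lam_mono: "\<And>i j. 1 \<le> i \<Longrightarrow> i \<le> j \<Longrightarrow> j \<le> n \<Longrightarrow> lam j \<le> lam i"
    and mu_mono: "\<And>i j. 1 \<le> i \<Longrightarrow> i \<le> j \<Longrightarrow> j \<le> n - 1 \<Longrightarrow> mu j \<le> mu i"
    and crit: "pderiv (\<Prod>j=1..n. [:- lam j, 1:])
               = smult (of_nat n) (\<Prod>j=1..n-1. [:- mu j, 1:])"
    and "1 \<le> l" and "l \<le> r" and "r \<le> n - 1"
  shows "(\<Sum>j=l..r. lam (j+1)) + (1 / real (r+1)) * (\<Sum>j=l..r. lam l - lam (j+1))
           \<le> (\<Sum>j=l..r. mu j)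
       \<and> (\<Sum>j=l..r. mu j)
           \<le> (\<Sum>j=l..r. lam j) - (1 / real (n-l+1)) * (\<Sum>j=l..r. lam j - lam (r+1))"
proof -
  note n2 = assms(1) and l1 = assms(5) and lr = assms(6) and rn = assms(7)
  obtain p where pb: "\<forall>k\<in>{1..n-1}. lam (Suc k) \<le> p k \<and> p k \<le> lam k"
    and pc: "pderiv (\<Prod>k=1..n. [:- lam k, 1:]) = smult (of_nat n) (\<Prod>k=1..n-1. [:- p k, 1:])"
    using crit_exists[of n lam] n2 lam_mono by auto
  have pm: "p j \<le> p i" if "1 \<le> i" "i \<le> j" "j \<le> n - 1" for i j
  proof (cases "i = j")
    case False
    then have "p j \<le> lam j" "lam (Suc i) \<le> p i" using pb that by auto
    moreover have "lam j \<le> lam (Suc i)" using lam_mono[of "Suc i" j] that False by auto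
    ultimately show ?thesis by linarith
  qed simp
  have "smult (of_nat n) (\<Prod>k=1..n-1. [:- mu k, 1:]) = smult (of_nat n) (\<Prod>k=1..n-1. [:- p k, 1:])"
    using crit pc by simp
  then have "smult (1 / of_nat n) (smult (of_nat n) (\<Prod>k=1..n-1. [:- mu k, 1:]))
     = smult (1 / of_nat n) (smult (of_nat n) (\<Prod>k=1..n-1. [:- p k, 1:]))" by simp
  then have eqp: "(\<Prod>k=1..n-1. [:- mu k, 1:]) = (\<Prod>k=1..n-1. [:- p k, 1:])"
    using n2 by (simp only: smult_smult) simp
  have mup: "mu j = p j" if "j \<in> {1..n-1}" for j
    by (rule sorted_unique[OF mu_mono pm eqp that])
  have mub: "\<forall>k\<in>{1..n-1}. lam (Suc k) \<le> mu k \<and> mu k \<le> lam k" using pb mup by simp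
  have charq: "t \<le> mu j \<longleftrightarrow> 0 \<le> (\<Sum>k=1..n. 1 / (t - lam k))"
    if "j \<in> {1..n-1}" "lam (Suc j) < t" "t < lam j" for j t
    by (rule charF[OF lam_mono mub crit that])
  have lower: "(\<Sum>j=l..r. lam (j+1)) + (1 / real (r+1)) * (\<Sum>j=l..r. lam l - lam (j+1))
           \<le> (\<Sum>j=l..r. mu j)"
  proof -
    define c1 where "c1 k = (if k \<le> l then lam l else lam k)" for k
    have c1m: "c1 j \<le> c1 i" if "1 \<le> i" "i \<le> j" "j \<le> r + 1" for i j
      using that lam_mono[of l j] lam_mono[of i j] l1 rn lr unfolding c1_def by auto
    have ex: "\<exists>nu. (\<forall>k\<in>{1..r+1-1}. c1 (Suc k) \<le> nu k \<and> nu k \<le> c1 k)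
           \<and> pderiv (\<Prod>k=1..r+1. [:- c1 k, 1:]) = smult (of_nat (r+1)) (\<Prod>k=1..r+1-1. [:- nu k, 1:])"
      by (rule crit_exists) (use c1m in auto)
    then obtain nu where nb: "\<forall>k\<in>{1..r+1-1}. c1 (Suc k) \<le> nu k \<and> nu k \<le> c1 k"
      and nc: "pderiv (\<Prod>k=1..r+1. [:- c1 k, 1:]) = smult (of_nat (r+1)) (\<Prod>k=1..r+1-1. [:- nu k, 1:])"
      by blast
    have cmp: "nu j \<le> mu j" if j: "j \<in> {l..r}" for j
    proof (rule ccontr)
      assume "\<not> nu j \<le> mu j"
      define t where "t = (mu j + nu j) / 2"
      have jn: "j \<in> {1..n-1}" using j l1 rn by auto
      have jr: "j \<in> {1..r+1-1}" using j l1 by auto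
      have h1: "lam (Suc j) \<le> mu j" "mu j \<le> lam j" using mub jn by auto
      have h2: "nu j \<le> c1 j" "c1 (Suc j) \<le> nu j" using nb jr by auto
      have c1j: "c1 j = lam j" "c1 (Suc j) = lam (Suc j)" using j by (auto simp: c1_def)
      have tt: "mu j < t" "t < nu j" using \<open>\<not> nu j \<le> mu j\<close> unfolding t_def by auto
      have t1: "lam (Suc j) < t" "t < lam j" using tt h1 h2 c1j by auto
      have Fq: "\<not> 0 \<le> (\<Sum>k=1..n. 1 / (t - lam k))" using charq[OF jn t1] tt by auto
      have Ff: "0 \<le> (\<Sum>k=1..r+1. 1 / (t - c1 k))"
      proof -
        have "c1 (Suc j) < t" "t < c1 j" using t1 c1j by auto
        from charF[OF c1m nb nc jr this] show ?thesis using tt by simp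
      qed
      have "(\<Sum>k=1..r+1. 1 / (t - c1 k)) \<le> (\<Sum>k=1..r+1. 1 / (t - lam k))"
      proof (rule sum_mono)
        fix k assume k: "k \<in> {1..r+1}"
        show "1 / (t - c1 k) \<le> 1 / (t - lam k)"
        proof (cases "k \<le> l")
          case True
          have "lam l \<le> lam k" using lam_mono[of k l] k True l1 lr rn by auto
          moreover have "lam j \<le> lam l" using lam_mono[of l j] j l1 rn by auto
          ultimately have "t - lam k \<le> t - lam l" "t - lam l < 0" using t1 by auto
          then have "inverse (t - lam l) \<le> inverse (t - lam k)" by (rule le_imp_inverse_le_neg)
          then show ?thesis using True by (simp add: c1_def inverse_eq_divide)
        qed (simp add: c1_def)
      qed
      moreover have "0 \<le> (\<Sum>k=r+2..n. 1 / (t - lam k))"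
      proof (rule sum_nonneg)
        fix k assume k: "k \<in> {r+2..n}"
        have "lam k \<le> lam (Suc j)" using lam_mono[of "Suc j" k] k j by auto
        then show "0 \<le> 1 / (t - lam k)" using t1 by auto
      qed
      moreover have "(\<Sum>k=1..n. 1 / (t - lam k)) = (\<Sum>k=1..r+1. 1 / (t - lam k)) + (\<Sum>k=r+2..n. 1 / (t - lam k))"
        using sum_split[of 1 "r+1" n "\<lambda>k. 1 / (t - lam k)"] rn n2 by simp
      ultimately show False using Fq Ff by linarith
    qed
    have S1: "(\<Sum>j=l..r. nu j) \<le> (\<Sum>j=l..r. mu j)" by (rule sum_mono) (use cmp in auto)
    have V: "(\<Sum>k=1..r. nu k) = (real (r+1) - 1) / real (r+1) * (\<Sum>k=1..r+1. c1 k)"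
      using vieta[of "r+1" c1 nu] nc lr l1 by simp
    have sp: "(\<Sum>k=1..r. nu k) = (\<Sum>k=1..l-1. nu k) + (\<Sum>k=l..r. nu k)"
      using sum_split[of 1 "l-1" r nu] l1 lr by simp
    have A: "(\<Sum>k=1..l-1. nu k) \<le> (\<Sum>k=1..l-1. lam l)"
    proof (rule sum_mono)
      fix k assume k: "k \<in> {1..l-1}"
      then have "k \<in> {1..r+1-1}" "k \<le> l" using lr by auto
      then show "nu k \<le> lam l" using nb unfolding c1_def by fastforce
    qed
    have C1: "(\<Sum>k=1..r+1. c1 k) = (\<Sum>k=1..l. c1 k) + (\<Sum>k=l+1..r+1. c1 k)"
      using sum_split[of 1 l "r+1" c1] l1 lr by simp
    have C2: "(\<Sum>k=1..l. c1 k) = real l * lam l" by (simp add: c1_def)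
    have C3: "(\<Sum>k=l+1..r+1. c1 k) = (\<Sum>j=l..r. lam (j+1))"
      using sum.shift_bounds_cl_nat_ivl[of c1 l 1 r] by (simp add: c1_def)
    define S where "S = (\<Sum>j=l..r. lam (j+1))"
    define a where "a = lam l"
    define K where "K = (real (r+1) - 1) / real (r+1)"
    have T: "(\<Sum>j=l..r. lam l - lam (j+1)) = real (r + 1 - l) * a - S"
      unfolding S_def a_def by (simp add: sum_subtractf)
    have e1: "(\<Sum>k=1..r+1. c1 k) = real l * a + S" using C1 C2 C3 by (simp add: S_def a_def)
    have e2: "(\<Sum>k=1..r. nu k) = K * (real l * a + S)" using V e1 unfolding K_def by simp
    have A2: "(\<Sum>k=1..l-1. nu k) \<le> (real l - 1) * a" using A l1 unfolding a_def by (simp add: of_nat_diff)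
    have cast: "real (r + 1 - l) = real r + 1 - real l" using lr l1 by auto
    have id: "S + (1 / real (r+1)) * (real (r + 1 - l) * a - S) = K * (real l * a + S) - (real l - 1) * a"
      unfolding K_def cast by (simp add: field_simps)
    have goal: "(\<Sum>j=l..r. lam (j+1)) + (1 / real (r+1)) * (\<Sum>j=l..r. lam l - lam (j+1))
        = S + (1 / real (r+1)) * (real (r + 1 - l) * a - S)" unfolding T S_def ..
    show ?thesis unfolding goal id using S1 sp e2 A2 by linarith
  qed
  have upper: "(\<Sum>j=l..r. mu j)
           \<le> (\<Sum>j=l..r. lam j) - (1 / real (n-l+1)) * (\<Sum>j=l..r. lam j - lam (r+1))"
  proof -
    define d where "d = r - l + 1"
    define c2 where "c2 k = (if k \<le> d then lam (k + l - 1) else lam (r+1))" for k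
    have dn: "d \<le> n - l" "1 \<le> d" "d + l - 1 = r" using lr rn l1 unfolding d_def by auto
    have c2m: "c2 j \<le> c2 i" if "1 \<le> i" "i \<le> j" "j \<le> n - l + 1" for i j
    proof -
      consider "j \<le> d" | "i \<le> d" "\<not> j \<le> d" | "\<not> i \<le> d" using that by linarith
      then show ?thesis
      proof cases
        case 1 then show ?thesis using that lam_mono[of "i + l - 1" "j + l - 1"] dn l1 rn lr unfolding c2_def by auto
      next
        case 2 then show ?thesis using that lam_mono[of "i + l - 1" "r + 1"] dn rn l1 lr unfolding c2_def by auto
      next
        case 3 then show ?thesis using that unfolding c2_def by auto
      qed
    qed
    have ex: "\<exists>rho. (\<forall>k\<in>{1..n-l+1-1}. c2 (Suc k) \<le> rho k \<and> rho k \<le> c2 k)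
           \<and> pderiv (\<Prod>k=1..n-l+1. [:- c2 k, 1:]) = smult (of_nat (n-l+1)) (\<Prod>k=1..n-l+1-1. [:- rho k, 1:])"
      by (rule crit_exists) (use c2m in auto)
    then obtain rho where rb: "\<forall>k\<in>{1..n-l+1-1}. c2 (Suc k) \<le> rho k \<and> rho k \<le> c2 k"
      and rc: "pderiv (\<Prod>k=1..n-l+1. [:- c2 k, 1:]) = smult (of_nat (n-l+1)) (\<Prod>k=1..n-l+1-1. [:- rho k, 1:])"
      by blast
    have cmp: "mu j \<le> rho (j - l + 1)" if j: "j \<in> {l..r}" for j
    proof (rule ccontr)
      define i where "i = j - l + 1"
      assume "\<not> mu j \<le> rho (j - l + 1)"
      then have lt: "rho i < mu j" unfolding i_def by simp
      define t where "t = (mu j + rho i) / 2"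
      have jn: "j \<in> {1..n-1}" using j l1 rn by auto
      have ii: "i \<in> {1..n-l+1-1}" using j dn unfolding i_def d_def by auto
      have h1: "lam (Suc j) \<le> mu j" "mu j \<le> lam j" using mub jn by auto
      have h2: "rho i \<le> c2 i" "c2 (Suc i) \<le> rho i" using rb ii by auto
      have c2i1: "c2 i = lam j" using j l1 unfolding c2_def i_def d_def by auto
      have c2i2: "c2 (Suc i) = lam (Suc j)"
      proof (cases "Suc i \<le> d")
        case True then show ?thesis using j l1 unfolding c2_def i_def d_def by auto
      next
        case False
        then have "j = r" using j l1 unfolding i_def d_def by auto
        then show ?thesis using False unfolding c2_def by simp
      qed
      note c2i = c2i1 c2i2
      have tt: "rho i < t" "t < mu j" using lt unfolding t_def by auto
      have t1: "lam (Suc j) < t" "t < lam j" using tt h1 h2 c2i by auto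
      have Fq: "0 \<le> (\<Sum>k=1..n. 1 / (t - lam k))" using charq[OF jn t1] tt by auto
      have Fg: "\<not> 0 \<le> (\<Sum>k=1..n-l+1. 1 / (t - c2 k))"
      proof -
        have "c2 (Suc i) < t" "t < c2 i" using t1 c2i by auto
        from charF[OF c2m rb rc ii this] show ?thesis using tt by simp
      qed
      have "(\<Sum>k=1..l-1. 1 / (t - lam k)) \<le> 0"
      proof (rule sum_nonpos)
        fix k assume k: "k \<in> {1..l-1}"
        have "lam j \<le> lam k" using lam_mono[of k j] k j rn by auto
        then show "1 / (t - lam k) \<le> 0" using t1 by auto
      qed
      moreover have "(\<Sum>k=l..n. 1 / (t - lam k)) = (\<Sum>i=1..n-l+1. 1 / (t - lam (i + (l - 1))))"
        using sum.shift_bounds_cl_nat_ivl[of "\<lambda>k. 1 / (t - lam k)" 1 "l - 1" "n - l + 1"] l1 rn lr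
        by simp
      moreover have "(\<Sum>i=1..n-l+1. 1 / (t - lam (i + (l - 1)))) \<le> (\<Sum>i=1..n-l+1. 1 / (t - c2 i))"
      proof (rule sum_mono)
        fix k assume k: "k \<in> {1..n-l+1}"
        show "1 / (t - lam (k + (l - 1))) \<le> 1 / (t - c2 k)"
        proof (cases "k \<le> d")
          case True then show ?thesis using l1 unfolding c2_def by simp
        next
          case False
          have "lam (k + (l - 1)) \<le> lam (r + 1)" using lam_mono[of "r+1" "k + (l - 1)"] k False dn rn l1 lr by auto
          moreover have "lam (r + 1) \<le> lam (Suc j)" using lam_mono[of "Suc j" "r+1"] j rn n2 by auto
          ultimately have "t - lam (r+1) \<le> t - lam (k + (l - 1))" "0 < t - lam (r+1)" using t1 by auto
          then have "inverse (t - lam (k + (l - 1))) \<le> inverse (t - lam (r+1))" by (rule le_imp_inverse_le)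
          then show ?thesis using False unfolding c2_def by (simp add: inverse_eq_divide)
        qed
      qed
      moreover have "(\<Sum>k=1..n. 1 / (t - lam k)) = (\<Sum>k=1..l-1. 1 / (t - lam k)) + (\<Sum>k=l..n. 1 / (t - lam k))"
        using sum_split[of 1 "l-1" n "\<lambda>k. 1 / (t - lam k)"] l1 lr rn by simp
      ultimately show False using Fq Fg by linarith
    qed
    have S1: "(\<Sum>j=l..r. mu j) \<le> (\<Sum>j=l..r. rho (j - l + 1))" by (rule sum_mono) (use cmp in auto)
    have sh: "(\<Sum>j=l..r. rho (j - l + 1)) = (\<Sum>i=1..d. rho i)"
      using sum.shift_bounds_cl_nat_ivl[of "\<lambda>j. rho (j - l + 1)" 1 "l - 1" d] l1 dn by simp
    have V: "(\<Sum>k=1..n-l. rho k) = (real (n-l+1) - 1) / real (n-l+1) * (\<Sum>k=1..n-l+1. c2 k)"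
    proof -
      have m2: "2 \<le> n - l + 1" using lr rn l1 n2 by auto
      show ?thesis using vieta[OF m2 rc] by simp
    qed
    have sp: "(\<Sum>k=1..n-l. rho k) = (\<Sum>k=1..d. rho k) + (\<Sum>k=d+1..n-l. rho k)"
      using sum_split[of 1 d "n-l" rho] dn by simp
    have tail: "(\<Sum>k=d+1..n-l. lam (r+1)) \<le> (\<Sum>k=d+1..n-l. rho k)"
    proof (rule sum_mono)
      fix k assume k: "k \<in> {d+1..n-l}"
      then have "k \<in> {1..n-l+1-1}" "\<not> Suc k \<le> d" by auto
      then show "lam (r+1) \<le> rho k" using rb unfolding c2_def by fastforce
    qed
    have C1: "(\<Sum>k=1..n-l+1. c2 k) = (\<Sum>k=1..d. c2 k) + (\<Sum>k=d+1..n-l+1. c2 k)"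
      using sum_split[of 1 d "n-l+1" c2] dn by simp
    have C2: "(\<Sum>k=1..d. c2 k) = (\<Sum>j=l..r. lam j)"
    proof -
      have "(\<Sum>k=1..d. c2 k) = (\<Sum>k=1..d. lam (k + (l - 1)))"
        using l1 by (intro sum.cong) (auto simp: c2_def)
      also have "\<dots> = (\<Sum>j=1+(l-1)..d+(l-1). lam j)"
        by (rule sum.shift_bounds_cl_nat_ivl[symmetric])
      also have "1+(l-1) = l" using l1 by auto
      also have "d + (l-1) = r" using l1 dn by auto
      finally show ?thesis by simp
    qed
    have C3: "(\<Sum>k=d+1..n-l+1. c2 k) = real (n - l + 1 - d) * lam (r+1)"
      by (simp add: c2_def)
    define T where "T = (\<Sum>j=l..r. lam j)"
    define b where "b = lam (r+1)"
    define W where "W = real (n - l + 1)"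
    have Tg: "(\<Sum>j=l..r. lam j - lam (r+1)) = T - real d * b"
      unfolding T_def b_def d_def using lr by (simp add: sum_subtractf Suc_diff_le)
    have casts: "real (n - l + 1 - d) = real n - real r" "real (n - l - d) = real n - real r - 1"
      "W = real n - real l + 1" "real d = real r - real l + 1"
      using dn lr rn l1 unfolding W_def d_def by auto
    have tl2: "(\<Sum>k=d+1..n-l. lam (r+1)) = (real n - real r - 1) * b" using casts unfolding b_def by simp
    have e1: "(\<Sum>k=1..n-l. rho k) = (W - 1) / W * (T + (real n - real r) * b)"
      using V C1 C2 C3 casts unfolding W_def T_def b_def by simp
    have id: "T - (1 / W) * (T - real d * b) = (W - 1) / W * (T + (real n - real r) * b) - (real n - real r - 1) * b"
      unfolding casts using lr rn l1 by (simp add: field_simps)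
    have goal: "(\<Sum>j=l..r. lam j) - (1 / real (n-l+1)) * (\<Sum>j=l..r. lam j - lam (r+1))
       = T - (1 / W) * (T - real d * b)" using Tg unfolding T_def W_def by simp
    show ?thesis unfolding goal id using S1 sh sp e1 tail tl2 by linarith
  qed
  show ?thesis using lower upper by blast
qed

end
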